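(* Let $X$ be a set, let $\mathcal{L}$ be a nest on $X$, and let $Y\subseteq X$. Then $X={\uparrow}Y$ if and only if there exists a subfamily $\mathcal{L}'=\{L_i : i\in I\}\subseteq\mathcal{L}$ with $\bigcap_{i\in I}L_i=\emptyset$ such that $Y\cap L_i\neq\emptyset$ for every $i\in I$.
   Context: A nest on $X$ is a family of subsets of $X$ totally ordered by inclusion. Define $x\triangleleft_{\mathcal{L}} y$ iff there exists $L\in\mathcal{L}$ with $x\in L$ and $y\notin L$. For $Y\subseteq X$, ${\uparrow}Y=\{x\in X : \exists y\in Y,\ y\triangleleft_{\mathcal{L}} x\}$. *)

theory Defs
  imports Main
begin

definition nest :: "'a set \<Rightarrow> 'a set set \<Rightarrow> bool" where
  "nest X \<L> \<longleftrightarrow> (\<forall>A\<in>\<L>. A \<subseteq> X) \<and> (\<forall>A\<in>\<L>. \<forall>B\<in>\<L>. A \<subseteq> B \<or> B \<subseteq> A)"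

definition nest_rel :: "'a set set \<Rightarrow> 'a \<Rightarrow> 'a \<Rightarrow> bool" where
  "nest_rel \<L> x y \<longleftrightarrow> (\<exists>L\<in>\<L>. x \<in> L \<and> y \<notin> L)"

definition nest_up :: "'a set \<Rightarrow> 'a set set \<Rightarrow> 'a set \<Rightarrow> 'a set" where
  "nest_up X \<L> Y = {x \<in> X. \<exists>y\<in>Y. nest_rel \<L> y x}"

end

theory Submission
  imports Defs
begin

theorem proposition4p3:
  fixes X :: "'a set" and \<L> :: "'a set set" and Y :: "'a set"
  assumes "nest X \<L>" and "Y \<subseteq> X"
  shows "X = nest_up X \<L> Y \<longleftrightarrow>
    (\<exists>\<L>'. \<L>' \<subseteq> \<L> \<and> X \<inter> \<Inter>\<L>' = {} \<and> (\<forall>L\<in>\<L>'. Y \<inter> L \<noteq> {}))"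
proof
  assume h: "X = nest_up X \<L> Y"
  show "\<exists>\<L>'. \<L>' \<subseteq> \<L> \<and> X \<inter> \<Inter>\<L>' = {} \<and> (\<forall>L\<in>\<L>'. Y \<inter> L \<noteq> {})"
  proof (intro exI[of _ "{L\<in>\<L>. Y \<inter> L \<noteq> {}}"] conjI)
    show "X \<inter> \<Inter>{L\<in>\<L>. Y \<inter> L \<noteq> {}} = {}"
    proof (rule ccontr)
      assume "X \<inter> \<Inter>{L\<in>\<L>. Y \<inter> L \<noteq> {}} \<noteq> {}"
      then obtain x where x: "x \<in> X" "x \<in> \<Inter>{L\<in>\<L>. Y \<inter> L \<noteq> {}}" by blast
      then have "x \<in> nest_up X \<L> Y" using h by blast
      then obtain y L where "y \<in> Y" "L \<in> \<L>" "y \<in> L" "x \<notin> L"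
        unfolding nest_up_def nest_rel_def by blast
      then show False using x by blast
    qed
  qed auto
next
  assume "\<exists>\<L>'. \<L>' \<subseteq> \<L> \<and> X \<inter> \<Inter>\<L>' = {} \<and> (\<forall>L\<in>\<L>'. Y \<inter> L \<noteq> {})"
  then obtain \<L>' where a: "\<L>' \<subseteq> \<L>" "X \<inter> \<Inter>\<L>' = {}" "\<forall>L\<in>\<L>'. Y \<inter> L \<noteq> {}" by blast
  show "X = nest_up X \<L> Y"
  proof
    show "X \<subseteq> nest_up X \<L> Y"
    proof
      fix x assume x: "x \<in> X"
      then obtain L where L: "L \<in> \<L>'" "x \<notin> L" using a(2) by blast
      then obtain y where "y \<in> Y" "y \<in> L" using a(3) by blast
      then show "x \<in> nest_up X \<L> Y" using x L a(1)
        unfolding nest_up_def nest_rel_def by blast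
    qed
  qed (auto simp: nest_up_def)
qed

end
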